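(* Let $n\ge0$ and let $\mathfrak g$ and $\mathfrak q$ be $n$-Lie-stem Leibniz algebras with $\mathfrak g\sim_n\mathfrak q$. Then $\mathcal Z_n^{\mathsf{Lie}}(\mathfrak g)\cong\mathcal Z_n^{\mathsf{Lie}}(\mathfrak q)$.
   Context: All Leibniz algebras are over a field $\mathbb{K}$ with $\frac12\in\mathbb{K}$. A Leibniz algebra is a vector space $\mathfrak g$ with a bilinear bracket $[-,-]$ satisfying $[x,[y,z]]=[[x,y],z]-[[x,z],y]$. For $x,y\in\mathfrak g$ put $[x,y]_{lie}=[x,y]+[y,x]$. For two-sided ideals $\mathfrak m,\mathfrak n$ of $\mathfrak g$, $[\mathfrak m,\mathfrak n]_{\mathsf{Lie}}$ denotes the two-sided ideal of $\mathfrak g$ generated by $\{[m,x]_{lie}: m\in\mathfrak m, x\in\mathfrak n\}$. Lower Lie-central series: $\gamma_1^{\mathsf{Lie}}(\mathfrak g)=\mathfrak g$, $\gamma_i^{\mathsf{Lie}}(\mathfrak g)=[\gamma_{i-1}^{\mathsf{Lie}}(\mathfrak g),\mathfrak g]_{\mathsf{Lie}}$ for $i\ge2$. Upper Lie-central series: $\mathcal Z_0^{\mathsf{Lie}}(\mathfrak g)=0$, $\mathcal Z_i^{\mathsf{Lie}}(\mathfrak g)=\{x\in\mathfrak g:[x,y]_{lie}\in\mathcal Z_{i-1}^{\mathsf{Lie}}(\mathfrak g)\ \text{for all } y\in\mathfrak g\}$ for $i\ge1$. A Leibniz algebra $\mathfrak g$ is an $n$-Lie-stem Leibniz algebra if $\mathcal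 Z_n^{\mathsf{Lie}}(\mathfrak g)\subseteq\gamma_{n+1}^{\mathsf{Lie}}(\mathfrak g)$. For $n\ge0$, Leibniz algebras $\mathfrak g_1,\mathfrak g_2$ are $n$-Lie-isoclinic, written $\mathfrak g_1\sim_n\mathfrak g_2$, if there exist Leibniz algebra isomorphisms $\eta:\mathfrak g_1/\mathcal Z_n^{\mathsf{Lie}}(\mathfrak g_1)\to\mathfrak g_2/\mathcal Z_n^{\mathsf{Lie}}(\mathfrak g_2)$ and $\xi:\gamma_{n+1}^{\mathsf{Lie}}(\mathfrak g_1)\to\gamma_{n+1}^{\mathsf{Lie}}(\mathfrak g_2)$ such that $\xi([\cdots[[x_1,x_2]_{lie},x_3]_{lie},\ldots,x_{n+1}]_{lie})=[\cdots[[y_1,y_2]_{lie},y_3]_{lie},\ldots,y_{n+1}]_{lie}$ whenever $x_i\in\mathfrak g_1$, $y_i\in\mathfrak g_2$ satisfy $\eta(x_i+\mathcal Z_n^{\mathsf{Lie}}(\mathfrak g_1))=y_i+\mathcal Z_n^{\mathsf{Lie}}(\mathfrak g_2)$ for $i=1,\ldots,n+1$. *)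

theory Defs
  imports Main "HOL.Vector_Spaces"
begin

text \<open>A Leibniz algebra over a field 'k is modelled on a whole type 'a (the carrier):
  a vector space given by a scalar multiplication s, with a bilinear bracket br satisfying
  the (right) Leibniz identity [x,[y,z]] = [[x,y],z] - [[x,z],y].\<close>

definition leibniz_algebra :: "('k::field \<Rightarrow> 'a::ab_group_add \<Rightarrow> 'a) \<Rightarrow> ('a \<Rightarrow> 'a \<Rightarrow> 'a) \<Rightarrow> bool" where
  "leibniz_algebra s br \<longleftrightarrow>
     Vector_Spaces.vector_space s \<and>
     (\<forall>x. Vector_Spaces.linear s s (br x)) \<and> (\<forall>y. Vector_Spaces.linear s s (\<lambda>x. br x y)) \<and>
     (\<forall>x y z. br x (br y z) = br (br x y) z - br (br x z) y)"

definition lie_br :: "('a::ab_group_add \<Rightarrow> 'a \<Rightarrow> 'a) \<Rightarrow> 'a \<Rightarrow> 'a \<Rightarrow> 'a" where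
  "lie_br br x y = br x y + br y x"

definition two_sided_ideal :: "('k::field \<Rightarrow> 'a::ab_group_add \<Rightarrow> 'a) \<Rightarrow> ('a \<Rightarrow> 'a \<Rightarrow> 'a) \<Rightarrow> 'a set \<Rightarrow> bool" where
  "two_sided_ideal s br I \<longleftrightarrow> Modules.module.subspace s I \<and> (\<forall>x\<in>I. \<forall>y. br x y \<in> I \<and> br y x \<in> I)"

definition gen_ideal :: "('k::field \<Rightarrow> 'a::ab_group_add \<Rightarrow> 'a) \<Rightarrow> ('a \<Rightarrow> 'a \<Rightarrow> 'a) \<Rightarrow> 'a set \<Rightarrow> 'a set" where
  "gen_ideal s br S = \<Inter>{I. two_sided_ideal s br I \<and> S \<subseteq> I}"

definition lie_comm :: "('k::field \<Rightarrow> 'a::ab_group_add \<Rightarrow> 'a) \<Rightarrow> ('a \<Rightarrow> 'a \<Rightarrow> 'a) \<Rightarrow> 'a set \<Rightarrow> 'a set \<Rightarrow> 'a set" where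
  "lie_comm s br M N = gen_ideal s br {lie_br br m x | m x. m \<in> M \<and> x \<in> N}"

text \<open>Lower Lie-central series, indexed as in the paper: gamma 1 = g, gamma i = [gamma (i-1), g]_Lie.
  (The index 0 is junk and set to the whole algebra.)\<close>
fun lower_lie :: "('k::field \<Rightarrow> 'a::ab_group_add \<Rightarrow> 'a) \<Rightarrow> ('a \<Rightarrow> 'a \<Rightarrow> 'a) \<Rightarrow> nat \<Rightarrow> 'a set" where
  "lower_lie s br 0 = UNIV"
| "lower_lie s br (Suc 0) = UNIV"
| "lower_lie s br (Suc (Suc i)) = lie_comm s br (lower_lie s br (Suc i)) UNIV"

fun upper_lie :: "('a::ab_group_add \<Rightarrow> 'a \<Rightarrow> 'a) \<Rightarrow> nat \<Rightarrow> 'a set" where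
  "upper_lie br 0 = {0}"
| "upper_lie br (Suc i) = {x. \<forall>y. lie_br br x y \<in> upper_lie br i}"

definition n_lie_stem :: "nat \<Rightarrow> ('k::field \<Rightarrow> 'a::ab_group_add \<Rightarrow> 'a) \<Rightarrow> ('a \<Rightarrow> 'a \<Rightarrow> 'a) \<Rightarrow> bool" where
  "n_lie_stem n s br \<longleftrightarrow> upper_lie br n \<subseteq> lower_lie s br (n + 1)"

fun iter_lie :: "('a::ab_group_add \<Rightarrow> 'a \<Rightarrow> 'a) \<Rightarrow> (nat \<Rightarrow> 'a) \<Rightarrow> nat \<Rightarrow> 'a" where
  "iter_lie br x 0 = x 0"
| "iter_lie br x (Suc k) = lie_br br (iter_lie br x k) (x (Suc k))"

text \<open>Coset x + Z; the quotient g/Z is the set of all cosets.\<close>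
definition coset :: "'a::ab_group_add set \<Rightarrow> 'a \<Rightarrow> 'a set" where
  "coset Z x = {x + z | z. z \<in> Z}"

text \<open>A Leibniz algebra isomorphism between the quotients g1/Z1 and g2/Z2, given as a map on cosets;
  the quotient operations are those induced on cosets by representatives.\<close>
definition quot_iso ::
  "('k::field \<Rightarrow> 'a::ab_group_add \<Rightarrow> 'a) \<Rightarrow> ('a \<Rightarrow> 'a \<Rightarrow> 'a) \<Rightarrow> 'a set \<Rightarrow>
   ('k \<Rightarrow> 'b::ab_group_add \<Rightarrow> 'b) \<Rightarrow> ('b \<Rightarrow> 'b \<Rightarrow> 'b) \<Rightarrow> 'b set \<Rightarrow> ('a set \<Rightarrow> 'b set) \<Rightarrow> bool" where
  "quot_iso s1 br1 Z1 s2 br2 Z2 eta \<longleftrightarrow>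
     bij_betw eta (range (coset Z1)) (range (coset Z2)) \<and>
     (\<forall>x y a b. eta (coset Z1 x) = coset Z2 a \<and> eta (coset Z1 y) = coset Z2 b \<longrightarrow>
         eta (coset Z1 (x + y)) = coset Z2 (a + b) \<and>
         eta (coset Z1 (br1 x y)) = coset Z2 (br2 a b)) \<and>
     (\<forall>c x a. eta (coset Z1 x) = coset Z2 a \<longrightarrow> eta (coset Z1 (s1 c x)) = coset Z2 (s2 c a))"

definition sub_iso ::
  "('k::field \<Rightarrow> 'a::ab_group_add \<Rightarrow> 'a) \<Rightarrow> ('a \<Rightarrow> 'a \<Rightarrow> 'a) \<Rightarrow> 'a set \<Rightarrow>
   ('k \<Rightarrow> 'b::ab_group_add \<Rightarrow> 'b) \<Rightarrow> ('b \<Rightarrow> 'b \<Rightarrow> 'b) \<Rightarrow> 'b set \<Rightarrow> ('a \<Rightarrow> 'b) \<Rightarrow> bool" where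
  "sub_iso s1 br1 A s2 br2 B f \<longleftrightarrow>
     bij_betw f A B \<and>
     (\<forall>x\<in>A. \<forall>y\<in>A. f (x + y) = f x + f y \<and> f (br1 x y) = br2 (f x) (f y)) \<and>
     (\<forall>c. \<forall>x\<in>A. f (s1 c x) = s2 c (f x))"

definition n_lie_isoclinic ::
  "nat \<Rightarrow> ('k::field \<Rightarrow> 'a::ab_group_add \<Rightarrow> 'a) \<Rightarrow> ('a \<Rightarrow> 'a \<Rightarrow> 'a) \<Rightarrow>
   ('k \<Rightarrow> 'b::ab_group_add \<Rightarrow> 'b) \<Rightarrow> ('b \<Rightarrow> 'b \<Rightarrow> 'b) \<Rightarrow> bool" where
  "n_lie_isoclinic n s1 br1 s2 br2 \<longleftrightarrow>
     (\<exists>eta xi.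
        quot_iso s1 br1 (upper_lie br1 n) s2 br2 (upper_lie br2 n) eta \<and>
        sub_iso s1 br1 (lower_lie s1 br1 (n + 1)) s2 br2 (lower_lie s2 br2 (n + 1)) xi \<and>
        (\<forall>x y. (\<forall>i\<le>n. eta (coset (upper_lie br1 n) (x i)) = coset (upper_lie br2 n) (y i)) \<longrightarrow>
               xi (iter_lie br1 x n) = iter_lie br2 y n))"

end

theory Submission
  imports Defs
begin

inductive_set spn :: "('k::field \<Rightarrow> 'a::ab_group_add \<Rightarrow> 'a) \<Rightarrow> 'a set \<Rightarrow> 'a set"
  for s :: "'k::field \<Rightarrow> 'a::ab_group_add \<Rightarrow> 'a" and T :: "'a set" where
  spn_T: "t \<in> T \<Longrightarrow> t \<in> spn s T"
| spn_0: "0 \<in> spn s T"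
| spn_add: "a \<in> spn s T \<Longrightarrow> b \<in> spn s T \<Longrightarrow> a + b \<in> spn s T"
| spn_scl: "a \<in> spn s T \<Longrightarrow> s c a \<in> spn s T"

lemma spn_sum: "finite A \<Longrightarrow> (\<forall>i\<in>A. f i \<in> spn s T) \<Longrightarrow> (\<Sum>i\<in>A. f i) \<in> spn s T"
  by (induction A rule: finite_induct) (auto intro: spn.intros)

fun Fl :: "('a::ab_group_add \<Rightarrow> 'a \<Rightarrow> 'a) \<Rightarrow> 'a \<Rightarrow> 'a list \<Rightarrow> 'a" where
  "Fl br x [] = x"
| "Fl br x (y # ys) = Fl br (lie_br br x y) ys"

lemma upper_char: "x \<in> upper_lie br k \<longleftrightarrow> (\<forall>ys. length ys = k \<longrightarrow> Fl br x ys = 0)"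
proof (induction k arbitrary: x)
  case 0
  then show ?case by auto
next
  case (Suc k)
  show ?case
  proof
    assume "x \<in> upper_lie br (Suc k)"
    then show "\<forall>ys. length ys = Suc k \<longrightarrow> Fl br x ys = 0"
      using Suc by (auto simp: length_Suc_conv)
  next
    assume h: "\<forall>ys. length ys = Suc k \<longrightarrow> Fl br x ys = 0"
    have "lie_br br x y \<in> upper_lie br k" for y
      unfolding Suc proof (intro allI impI)
      fix ys :: "'a list" assume "length ys = k"
      then show "Fl br (lie_br br x y) ys = 0" using h[rule_format, of "y # ys"] by simp
    qed
    then show "x \<in> upper_lie br (Suc k)" by simp
  qed
qed

lemma gi_gen: "S \<subseteq> gen_ideal s br S"
  unfolding gen_ideal_def by auto

lemma gi_min: "two_sided_ideal s br J \<Longrightarrow> S \<subseteq> J \<Longrightarrow> gen_ideal s br S \<subseteq> J"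
  unfolding gen_ideal_def by auto

lemma gi_0: "vector_space s \<Longrightarrow> 0 \<in> gen_ideal s br S"
  unfolding gen_ideal_def two_sided_ideal_def
  by (auto simp: module.subspace_def module_iff_vector_space)

lemma gi_add: "vector_space s \<Longrightarrow> x \<in> gen_ideal s br S \<Longrightarrow> y \<in> gen_ideal s br S \<Longrightarrow> x + y \<in> gen_ideal s br S"
  unfolding gen_ideal_def two_sided_ideal_def
  by (auto simp: module.subspace_def module_iff_vector_space)

lemma gi_scl: "vector_space s \<Longrightarrow> x \<in> gen_ideal s br S \<Longrightarrow> s c x \<in> gen_ideal s br S"
  unfolding gen_ideal_def two_sided_ideal_def
  by (auto simp: module.subspace_def module_iff_vector_space)

lemma iter_cong: "(\<forall>i\<le>k. xs i = ys i) \<Longrightarrow> iter_lie br xs k = iter_lie br ys k"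
  by (induction k) auto

lemma gsum: 
  assumes "\<And>a b. a\<in>G \<Longrightarrow> b\<in>G \<Longrightarrow> f (a+b) = f a + f b"
    and "\<And>a b. a\<in>G \<Longrightarrow> b\<in>G \<Longrightarrow> a+b\<in>G" and "0\<in>G" and "f 0 = 0"
    and "finite A"
  shows "(\<forall>i\<in>A. t i \<in> G) \<longrightarrow> f (\<Sum>i\<in>A. t i) = (\<Sum>i\<in>A. f (t i)) \<and> (\<Sum>i\<in>A. t i) \<in> G"
  using assms(5) by (induction A rule: finite_induct) (auto simp: assms(1-4))

locale LA =
  fixes s :: "'k::field \<Rightarrow> 'a::ab_group_add \<Rightarrow> 'a" and br :: "'a \<Rightarrow> 'a \<Rightarrow> 'a"
  assumes LA: "leibniz_algebra s br"
begin

lemma vs: "vector_space s" using LA unfolding leibniz_algebra_def by auto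

lemma linR: "br x (a + b) = br x a + br x b" "br x (s c a) = s c (br x a)"
  using LA unfolding leibniz_algebra_def linear_iff by auto

lemma linL: "br (a + b) x = br a x + br b x" "br (s c a) x = s c (br a x)"
proof -
  have "Vector_Spaces.linear s s (\<lambda>a. br a x)" using LA unfolding leibniz_algebra_def by auto
  then show "br (a + b) x = br a x + br b x" "br (s c a) x = s c (br a x)"
    unfolding linear_iff by auto
qed

lemma zeroL: "br 0 x = 0"
  using linL(1)[of 0 0 x] by simp

lemma zeroR: "br x 0 = 0"
  using linR(1)[of x 0 0] by simp

lemma s0: "s c 0 = 0"
proof -
  have "s c (0 + 0) = s c 0 + s c 0" using vs unfolding vector_space_def by blast
  then show ?thesis by simp
qed

lemma jac: "br (br x y) z = br x (br y z) + br (br x z) y"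
proof -
  have h: "br x (br y z) = br (br x y) z - br (br x z) y"
    using LA unfolding leibniz_algebra_def by blast
  then show ?thesis by (simp add: eq_diff_eq)
qed

lemma Rder: "br (lie_br br a b) x = lie_br br a (br b x) + lie_br br (br a x) b"
  unfolding lie_br_def
  by (simp only: linL jac[of a b x] jac[of b a x]) (simp add: algebra_simps)

lemma annL: "br u (lie_br br a b) = 0"
proof -
  have "br u (br a b) = br (br u a) b - br (br u b) a" 
       "br u (br b a) = br (br u b) a - br (br u a) b"
    using LA unfolding leibniz_algebra_def by auto
  then show ?thesis unfolding lie_br_def by (simp add: linR)
qed

lemma lieL: "lie_br br (a + b) x = lie_br br a x + lie_br br b x"
   "lie_br br (s c a) x = s c (lie_br br a x)" "lie_br br 0 x = 0"
  unfolding lie_br_def by (simp_all add: linL linR zeroL zeroR algebra_simps)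
    (metis vs vector_space_def)

lemma lie_sum: "finite A \<Longrightarrow> lie_br br (\<Sum>i\<in>A. f i) x = (\<Sum>i\<in>A. lie_br br (f i) x)"
  by (induction A rule: finite_induct) (simp_all add: lieL)

lemma iter_der: "br (iter_lie br xs k) x = (\<Sum>i\<le>k. iter_lie br (xs(i := br (xs i) x)) k)"
proof (induction k)
  case 0
  then show ?case by simp
next
  case (Suc k)
  have e1: "iter_lie br (xs(Suc k := br (xs (Suc k)) x)) k = iter_lie br xs k"
    by (rule iter_cong) simp
  have "br (iter_lie br xs (Suc k)) x =
     lie_br br (iter_lie br xs k) (br (xs (Suc k)) x) + lie_br br (br (iter_lie br xs k) x) (xs (Suc k))"
    by (simp add: Rder)
  also have "lie_br br (br (iter_lie br xs k) x) (xs (Suc k)) =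
      (\<Sum>i\<le>k. lie_br br (iter_lie br (xs(i := br (xs i) x)) k) (xs (Suc k)))"
    unfolding Suc by (rule lie_sum) simp
  also have "\<dots> = (\<Sum>i\<le>k. iter_lie br (xs(i := br (xs i) x)) (Suc k))"
    by (rule sum.cong) auto
  also have "lie_br br (iter_lie br xs k) (br (xs (Suc k)) x) =
      iter_lie br (xs(Suc k := br (xs (Suc k)) x)) (Suc k)"
    using e1 by simp
  finally show ?case by (simp only: sum.atMost_Suc add.commute)
qed

lemma iter_in_lower: "iter_lie br xs k \<in> lower_lie s br (k+1)"
proof (induction k)
  case 0
  then show ?case by simp
next
  case (Suc k)
  have "lie_br br (iter_lie br xs k) (xs (Suc k)) \<in> {lie_br br m x |m x. m \<in> lower_lie s br (Suc k) \<and> x \<in> UNIV}"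
    using Suc by auto
  then show ?case
    using gi_gen[of "{lie_br br m x |m x. m \<in> lower_lie s br (Suc k) \<and> x \<in> UNIV}" s br]
    by (auto simp: lie_comm_def)
qed

abbreviation TT :: "nat \<Rightarrow> 'a set" where "TT k \<equiv> range (\<lambda>xs. iter_lie br xs k)"

lemma TT_mem: "iter_lie br xs k \<in> spn s (TT k)"
  by (rule spn_T[OF rangeI[of "\<lambda>xs. iter_lie br xs k" xs]])

lemma spn_ann: assumes k1: "k \<ge> 1" shows "g \<in> spn s (TT k) \<Longrightarrow> br y g = 0"
proof (induction g rule: spn.induct)
  case (spn_T t)
  then obtain xs where "t = iter_lie br xs k" by auto
  moreover obtain j where "k = Suc j" using k1 by (cases k) auto
  ultimately show ?case by (simp add: annL)
qed (simp_all add: zeroR linR s0)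

lemma spn_R: "g \<in> spn s (TT k) \<Longrightarrow> br g y \<in> spn s (TT k)"
proof (induction g rule: spn.induct)
  case (spn_T t)
  then obtain xs where txs: "t = iter_lie br xs k" by auto
  have "iter_lie br (xs(i := br (xs i) y)) k \<in> spn s (TT k)" for i
    by (rule TT_mem)
  then show ?case using txs by (auto simp: iter_der intro!: spn_sum)
qed (simp_all add: zeroL linL spn.intros)

lemma spn_ideal: "k \<ge> 1 \<Longrightarrow> two_sided_ideal s br (spn s (TT k))"
proof -
  assume k: "k \<ge> 1"
  have "module.subspace s (spn s (TT k))"
    using vs by (auto simp: module.subspace_def module_iff_vector_space intro: spn.intros)
  moreover have "\<forall>x\<in>spn s (TT k). \<forall>y. br x y \<in> spn s (TT k) \<and> br y x \<in> spn s (TT k)"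
  proof (intro ballI allI conjI)
    fix x y assume x: "x \<in> spn s (TT k)"
    show "br x y \<in> spn s (TT k)" by (rule spn_R[OF x])
    have "br y x = 0" by (rule spn_ann[OF k x])
    then show "br y x \<in> spn s (TT k)" by (simp only: spn.spn_0)
  qed
  ultimately show ?thesis unfolding two_sided_ideal_def by (rule conjI)
qed

lemma lower_sub_spn: "lower_lie s br (Suc j + 1) \<subseteq> spn s (TT (Suc j))"
proof (induction j)
  case 0
  have "lie_br br m x \<in> spn s (TT 1)" for m x
  proof -
    have "lie_br br m x = iter_lie br (\<lambda>i. if i = 0 then m else x) 1" by simp
    then show ?thesis by (simp only: TT_mem)
  qed
  then have sub1: "{lie_br br m x |m x. m \<in> (UNIV::'a set) \<and> x \<in> (UNIV::'a set)} \<subseteq> spn s (TT 1)"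
    by blast
  have id1: "two_sided_ideal s br (spn s (TT 1))" by (rule spn_ideal) simp
  have "lower_lie s br (Suc 0 + 1) = gen_ideal s br {lie_br br m x |m x. m \<in> (UNIV::'a set) \<and> x \<in> (UNIV::'a set)}"
    by (simp add: lie_comm_def)
  with gi_min[OF id1 sub1] show ?case by (simp only: One_nat_def)
next
  case (Suc j)
  have L: "lie_br br m x \<in> spn s (TT (Suc (Suc j)))" if "m \<in> spn s (TT (Suc j))" for m x
    using that
  proof (induction m rule: spn.induct)
    case (spn_T t)
    then obtain xs where t: "t = iter_lie br xs (Suc j)" by auto
    have "lie_br br t x = iter_lie br (xs(Suc (Suc j) := x)) (Suc (Suc j))"
      using iter_cong[of "Suc j" xs "xs(Suc (Suc j) := x)" br] t by simp
    then show ?case by (simp only: TT_mem)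
  next
    case spn_0 show ?case by (simp only: lieL spn.spn_0)
  next
    case (spn_add a b) then show ?case by (simp only: lieL spn.spn_add)
  next
    case (spn_scl a c) then show ?case by (simp only: lieL spn.spn_scl)
  qed
  have IH: "lower_lie s br (Suc (Suc j)) \<subseteq> spn s (TT (Suc j))" using Suc by simp
  have sub: "{lie_br br m x |m x. m \<in> lower_lie s br (Suc (Suc j)) \<and> x \<in> (UNIV::'a set)}
      \<subseteq> spn s (TT (Suc (Suc j)))"
    using L IH by blast
  have id1: "two_sided_ideal s br (spn s (TT (Suc (Suc j))))" by (rule spn_ideal) simp
  have "lower_lie s br (Suc (Suc j) + 1) = gen_ideal s br {lie_br br m x |m x. m \<in> lower_lie s br (Suc (Suc j)) \<and> x \<in> (UNIV::'a set)}"
    by (simp add: lie_comm_def)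
  with gi_min[OF id1 sub] show ?case by (simp only:)
qed

lemma spn_sub_lower: "spn s (TT (Suc j)) \<subseteq> lower_lie s br (Suc j + 1)"
proof
  define X where "X = {lie_br br m x |m x. m \<in> lower_lie s br (Suc j) \<and> x \<in> (UNIV::'a set)}"
  have eqn: "lower_lie s br (Suc j + 1) = gen_ideal s br X"
    by (simp add: lie_comm_def X_def)
  fix g assume "g \<in> spn s (TT (Suc j))"
  then show "g \<in> lower_lie s br (Suc j + 1)"
  proof (induction g rule: spn.induct)
    case (spn_T t)
    then obtain xs where txs: "t = iter_lie br xs (Suc j)" by auto
    show ?case unfolding txs by (rule iter_in_lower)
  next
    case spn_0
    show ?case unfolding eqn by (rule gi_0[OF vs])
  next
    case (spn_add a b)
    show ?case using spn_add.IH unfolding eqn by (rule gi_add[OF vs])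
  next
    case (spn_scl a c)
    show ?case using spn_scl.IH unfolding eqn by (rule gi_scl[OF vs])
  qed
qed

lemma lower_eq: "lower_lie s br (Suc j + 1) = spn s (TT (Suc j))"
  by (rule equalityI[OF lower_sub_spn spn_sub_lower])

end


theorem mainTheorem18:
  fixes n :: nat
    and s1 :: "'k::field \<Rightarrow> 'a::ab_group_add \<Rightarrow> 'a" and br1 :: "'a \<Rightarrow> 'a \<Rightarrow> 'a"
    and s2 :: "'k \<Rightarrow> 'b::ab_group_add \<Rightarrow> 'b" and br2 :: "'b \<Rightarrow> 'b \<Rightarrow> 'b"
  assumes half: "(2::'k) \<noteq> 0"
    and g: "leibniz_algebra s1 br1"
    and q: "leibniz_algebra s2 br2"
    and g_stem: "n_lie_stem n s1 br1"
    and q_stem: "n_lie_stem n s2 br2"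
    and iso: "n_lie_isoclinic n s1 br1 s2 br2"
  shows "\<exists>f. sub_iso s1 br1 (upper_lie br1 n) s2 br2 (upper_lie br2 n) f"
proof -
  interpret A: LA s1 br1 by (rule LA.intro[OF g])
  interpret B: LA s2 br2 by (rule LA.intro[OF q])
  show ?thesis
  proof (cases n)
    case 0
    have "sub_iso s1 br1 {0} s2 br2 {0} (\<lambda>_. 0)"
      unfolding sub_iso_def by (simp add: bij_betw_def B.zeroL B.s0)
    then show ?thesis using 0 by auto
  next
    case (Suc m)
    obtain eta xi where qi: "quot_iso s1 br1 (upper_lie br1 n) s2 br2 (upper_lie br2 n) eta"
      and si: "sub_iso s1 br1 (lower_lie s1 br1 (n + 1)) s2 br2 (lower_lie s2 br2 (n + 1)) xi"
      and cp: "\<And>x y. (\<forall>i\<le>n. eta (coset (upper_lie br1 n) (x i)) = coset (upper_lie br2 n) (y i)) \<Longrightarrow>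
               xi (iter_lie br1 x n) = iter_lie br2 y n"
      using iso unfolding n_lie_isoclinic_def by blast
    define Z1 where "Z1 = upper_lie br1 n"
    define Z2 where "Z2 = upper_lie br2 n"
    define G1 where "G1 = lower_lie s1 br1 (n + 1)"
    define G2 where "G2 = lower_lie s2 br2 (n + 1)"
    define M where "M x y \<longleftrightarrow> eta (coset Z1 x) = coset Z2 y" for x y
    have G1s: "G1 = spn s1 (range (\<lambda>xs. iter_lie br1 xs n))"
      unfolding G1_def using A.lower_eq[of m] Suc by simp
    have G2s: "G2 = spn s2 (range (\<lambda>xs. iter_lie br2 xs n))"
      unfolding G2_def using B.lower_eq[of m] Suc by simp
    have n1: "n \<ge> 1" using Suc by simp
    have bij: "bij_betw eta (range (coset Z1)) (range (coset Z2))"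
      using qi unfolding quot_iso_def Z1_def Z2_def by blast
    have exY: "\<exists>y. M x y" for x
    proof -
      have "eta (coset Z1 x) \<in> range (coset Z2)" using bij_betwE[OF bij] by blast
      then show ?thesis unfolding M_def by auto
    qed
    have exX: "\<exists>x. M x y" for y
    proof -
      have "coset Z2 y \<in> eta ` range (coset Z1)" using bij_betw_imp_surj_on[OF bij] by auto
      then show ?thesis unfolding M_def by auto
    qed
    have Mbr: "M (br1 x x') (br2 y y')" if "M x y" "M x' y'" for x x' y y'
      using qi that unfolding quot_iso_def M_def Z1_def Z2_def by blast
    have xbij: "bij_betw xi G1 G2" using si unfolding sub_iso_def G1_def G2_def by blast
    have xadd: "xi (a + b) = xi a + xi b" if "a \<in> G1" "b \<in> G1" for a b
      using si that unfolding sub_iso_def G1_def by blast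
    have xbr: "xi (br1 a b) = br2 (xi a) (xi b)" if "a \<in> G1" "b \<in> G1" for a b
      using si that unfolding sub_iso_def G1_def by blast
    have xscl: "xi (s1 c a) = s2 c (xi a)" if "a \<in> G1" for a c
      using si that unfolding sub_iso_def G1_def by blast
    have G1_0: "0 \<in> G1" unfolding G1s by (rule spn.spn_0)
    have G1_add: "a + b \<in> G1" if "a \<in> G1" "b \<in> G1" for a b
      using that unfolding G1s by (rule spn.spn_add)
    have G1_scl: "s1 c a \<in> G1" if "a \<in> G1" for a c
      using that unfolding G1s by (rule spn.spn_scl)
    have xi0: "xi 0 = 0" using xadd[OF G1_0 G1_0] by simp
    have R1: "br1 a y \<in> G1" if "a \<in> G1" for a y
      using that unfolding G1s by (rule A.spn_R)
    have ann1: "br1 y a = 0" if "a \<in> G1" for a y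
      using that unfolding G1s by (rule A.spn_ann[OF n1])
    have ann2: "br2 y a = 0" if "a \<in> G2" for a y
      using that unfolding G2s by (rule B.spn_ann[OF n1])
    have xiG2: "xi a \<in> G2" if "a \<in> G1" for a
      using bij_betwE[OF xbij] that by blast
    have cpM: "xi (iter_lie br1 xs n) = iter_lie br2 ys n" if "\<forall>i\<le>n. M (xs i) (ys i)" for xs ys
      using cp that unfolding M_def Z1_def Z2_def by blast
    have iterG1: "iter_lie br1 xs n \<in> G1" for xs
      unfolding G1s by (rule A.TT_mem)
    have key: "xi (br1 g x) = br2 (xi g) y" if "g \<in> G1" "M x y" for g x y
    proof -
      have "g \<in> spn s1 (range (\<lambda>xs. iter_lie br1 xs n))" using that(1) G1s by simp
      then show ?thesis
      proof (induction g rule: spn.induct)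
        case (spn_T t)
        then obtain xs where t: "t = iter_lie br1 xs n" by auto
        define ys where "ys i = (SOME y. M (xs i) y)" for i
        have Mys: "M (xs i) (ys i)" for i
          unfolding ys_def using exY by (rule someI_ex)
        have xt: "xi t = iter_lie br2 ys n" unfolding t by (rule cpM) (simp add: Mys)
        have each: "xi (iter_lie br1 (xs(i := br1 (xs i) x)) n) = iter_lie br2 (ys(i := br2 (ys i) y)) n" for i
          by (rule cpM) (simp add: Mys Mbr[OF Mys that(2)])
        have "xi (br1 t x) = xi (\<Sum>i\<le>n. iter_lie br1 (xs(i := br1 (xs i) x)) n)"
          unfolding t by (simp only: A.iter_der)
        also have "\<dots> = (\<Sum>i\<le>n. xi (iter_lie br1 (xs(i := br1 (xs i) x)) n))"
          using gsum[of G1 xi "atMost n" "\<lambda>i. iter_lie br1 (xs(i := br1 (xs i) x)) n",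
              OF xadd G1_add G1_0 xi0] iterG1 by blast
        also have "\<dots> = (\<Sum>i\<le>n. iter_lie br2 (ys(i := br2 (ys i) y)) n)"
          by (simp only: each)
        also have "\<dots> = br2 (xi t) y" unfolding xt by (simp only: B.iter_der)
        finally show ?case .
      next
        case spn_0
        show ?case by (simp add: A.zeroL B.zeroL xi0)
      next
        case (spn_add a b)
        have aG: "a \<in> G1" and bG: "b \<in> G1" using spn_add.hyps G1s by simp_all
        have "xi (br1 (a + b) x) = xi (br1 a x + br1 b x)" by (simp only: A.linL)
        also have "\<dots> = xi (br1 a x) + xi (br1 b x)" by (rule xadd[OF R1[OF aG] R1[OF bG]])
        also have "\<dots> = br2 (xi a + xi b) y" using spn_add.IH by (simp add: B.linL)
        also have "xi a + xi b = xi (a + b)" by (rule xadd[OF aG bG, symmetric])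
        finally show ?case .
      next
        case (spn_scl a c)
        have aG: "a \<in> G1" using spn_scl.hyps G1s by simp_all
        have "xi (br1 (s1 c a) x) = xi (s1 c (br1 a x))" by (simp only: A.linL)
        also have "\<dots> = s2 c (xi (br1 a x))" by (rule xscl[OF R1[OF aG]])
        also have "\<dots> = br2 (s2 c (xi a)) y" using spn_scl.IH by (simp add: B.linL)
        also have "s2 c (xi a) = xi (s1 c a)" by (rule xscl[OF aG, symmetric])
        finally show ?case .
      qed
    qed
    have Fl: "\<forall>g ys. g \<in> G1 \<longrightarrow> list_all2 M xs ys \<longrightarrow>
        Fl br1 g xs \<in> G1 \<and> xi (Fl br1 g xs) = Fl br2 (xi g) ys" for xs
    proof (induction xs)
      case Nil
      then show ?case by simp
    next
      case (Cons x xs)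
      show ?case
      proof (intro allI impI)
        fix g ys assume gG: "g \<in> G1" and la: "list_all2 M (x # xs) ys"
        then obtain y ys' where ys: "ys = y # ys'" and Mxy: "M x y" and la': "list_all2 M xs ys'"
          by (cases ys) auto
        have l1: "lie_br br1 g x = br1 g x" unfolding lie_br_def using ann1[OF gG] by simp
        have l2: "lie_br br2 (xi g) y = br2 (xi g) y" unfolding lie_br_def using ann2[OF xiG2[OF gG]] by simp
        have "Fl br1 (br1 g x) xs \<in> G1 \<and> xi (Fl br1 (br1 g x) xs) = Fl br2 (xi (br1 g x)) ys'"
          using Cons.IH R1[OF gG] la' by blast
        then show "Fl br1 g (x # xs) \<in> G1 \<and> xi (Fl br1 g (x # xs)) = Fl br2 (xi g) ys"
          using ys l1 l2 key[OF gG Mxy] by simp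
      qed
    qed
    have Z1G: "Z1 \<subseteq> G1" using g_stem unfolding n_lie_stem_def Z1_def G1_def .
    have Z2G: "Z2 \<subseteq> G2" using q_stem unfolding n_lie_stem_def Z2_def G2_def .
    have img1: "xi g \<in> Z2" if gZ: "g \<in> Z1" for g
    proof -
      have gG: "g \<in> G1" using Z1G gZ by blast
      have "Fl br2 (xi g) ys = 0" if "length ys = n" for ys
      proof -
        define xs where "xs = map (\<lambda>y. SOME x. M x y) ys"
        have la: "list_all2 M xs ys"
          unfolding xs_def list_all2_conv_all_nth using exX by (auto intro: someI_ex)
        have "Fl br1 g xs = 0" using gZ that unfolding Z1_def upper_char xs_def by simp
        then show ?thesis using Fl[of xs] gG la xi0 by metis
      qed
      then show ?thesis unfolding Z2_def upper_char by blast
    qed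
    have img2: "h \<in> xi ` Z1" if hZ: "h \<in> Z2" for h
    proof -
      have "h \<in> G2" using Z2G hZ by blast
      then obtain g where gG: "g \<in> G1" and hg: "h = xi g"
        using bij_betw_imp_surj_on[OF xbij] by blast
      have "Fl br1 g xs = 0" if "length xs = n" for xs
      proof -
        define ys where "ys = map (\<lambda>x. SOME y. M x y) xs"
        have la: "list_all2 M xs ys"
          unfolding ys_def list_all2_conv_all_nth using exY by (auto intro: someI_ex)
        have "Fl br2 h ys = 0" using hZ that unfolding Z2_def upper_char ys_def by simp
        then have "xi (Fl br1 g xs) = xi 0" using Fl[of xs] gG la xi0 hg by metis
        moreover have "Fl br1 g xs \<in> G1" using Fl[of xs] gG la by blast
        ultimately show ?thesis using bij_betw_imp_inj_on[OF xbij] G1_0 by (meson inj_onD)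
      qed
      then have "g \<in> Z1" unfolding Z1_def upper_char by blast
      then show ?thesis using hg by blast
    qed
    have "sub_iso s1 br1 Z1 s2 br2 Z2 xi"
      unfolding sub_iso_def
    proof (intro conjI ballI allI)
      show "bij_betw xi Z1 Z2"
        unfolding bij_betw_def
      proof
        show "inj_on xi Z1" using inj_on_subset[OF bij_betw_imp_inj_on[OF xbij] Z1G] .
        show "xi ` Z1 = Z2" using img1 img2 by blast
      qed
      fix x y assume "x \<in> Z1" "y \<in> Z1"
      then have "x \<in> G1" "y \<in> G1" using Z1G by blast+
      then show "xi (x + y) = xi x + xi y" "xi (br1 x y) = br2 (xi x) (xi y)"
        by (simp_all add: xadd xbr)
    next
      fix c x assume "x \<in> Z1"
      then have "x \<in> G1" using Z1G by blast
      then show "xi (s1 c x) = s2 c (xi x)" by (rule xscl)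
    qed
    then show ?thesis unfolding Z1_def Z2_def by blast
  qed
qed

end
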